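(* Let $\beta>1$ and let $m\ge1$ be an integer with $m\ge C_\beta:=\frac1{2J}\exp(\beta^{1/(\beta-1)})$. Let $a\in\mathcal A$ be an action. For each $j\in\mathcal J$, let $\hat Q_j(t)$ and $\underline Q_j(t)$, $t\ge0$, be queue-length processes of an $M/M/1$ queue with arrival rate $\tilde\lambda^a_j$ and service rate $\mu_j$, coupled so that both are driven by the same Poisson arrival stream of rate $\tilde\lambda^a_j$ and the same Poisson stream of potential service completions of rate $\mu_j$ (a potential completion decreases the queue length by one if it is positive), with $\underline Q_j(0)=0$ and $\hat Q_j(0)$ drawn from the stationary distribution $\mathbb P(\hat Q_j(0)=n)=(1-\rho^a_j)(\rho^a_j)^n$; the pairs are independent across $j$. Let $\tau_m=\alpha\ln^\beta(2Jm)$. Then for every $t\ge\tau_m$, $$\mathbb P\bigl(\underline Q_j(t)=\hat Q_j(t)\ \text{for all } j\in\mathcal J\bigr)\ge1-\frac1{m^\beta}.$$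
   Context: There are $J$ servers $\mathcal J=\{1,\dots,J\}$ with service rates $\mu_j>0$. $\mathcal A$ is a finite set of actions; action $a$ determines for each server $j$ a total arrival rate $\tilde\lambda^a_j>0$ with load $\rho^a_j=\tilde\lambda^a_j/\mu_j\in(0,1)$ (in the paper, $\tilde\lambda^a_j=\sum_{i}x^a_{ij}$ is the arrival rate to server $j$'s virtual queue under the routing rates of a basic feasible solution $x^a$ of the routing LP with slack $\varepsilon>0$). The constant $\alpha\ge1$ satisfies $$\alpha\ge\max_{j\in\mathcal J}\max_{a\in\mathcal A}\Bigl\{\frac{3(\tilde\lambda^a_j+\mu_j)\ln(\rho^a_j)-2\sqrt{(\mu_j-\tilde\lambda^a_j)^2+9\tilde\lambda^a_j\mu_j\ln^2(\rho^a_j)}}{2(\mu_j-\tilde\lambda^a_j)^2\ln(\rho^a_j)},1\Bigr\}.$$ *)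

theory Defs
  imports "HOL-Probability.Probability"
begin

text \<open>Counting process of a renewal stream with inter-event times E 0, E 1, ...:
  number of events in [0,t]. With i.i.d. Exp(r) inter-event times this is a
  Poisson process of rate r.\<close>
definition count_proc :: "(nat \<Rightarrow> real) \<Rightarrow> real \<Rightarrow> nat" where
  "count_proc E t = card {n. (\<Sum>k\<le>n. E k) \<le> t}"

definition netput :: "nat \<Rightarrow> (nat \<Rightarrow> real) \<Rightarrow> (nat \<Rightarrow> real) \<Rightarrow> real \<Rightarrow> int" where
  "netput q0 EA ES t = int q0 + int (count_proc EA t) - int (count_proc ES t)"

text \<open>Queue length of a single-server queue with initial length q0, arrival stream EA
  and potential-service stream ES, where a potential completion decreases the queue by
  one iff it is positive (one-sided Skorokhod reflection of the netput process).\<close>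
definition queue_len :: "nat \<Rightarrow> (nat \<Rightarrow> real) \<Rightarrow> (nat \<Rightarrow> real) \<Rightarrow> real \<Rightarrow> int" where
  "queue_len q0 EA ES t =
     netput q0 EA ES t - min 0 (Inf ((\<lambda>s. netput q0 EA ES s) ` {0..t}))"

text \<open>Sources of randomness: initial state of server j, k-th inter-arrival time of
  server j, k-th inter-potential-service time of server j.\<close>
datatype src = Init nat | Arr nat nat | Srv nat nat

definition src_rv :: "(nat \<Rightarrow> 'w \<Rightarrow> nat) \<Rightarrow> (nat \<Rightarrow> nat \<Rightarrow> 'w \<Rightarrow> real)
    \<Rightarrow> (nat \<Rightarrow> nat \<Rightarrow> 'w \<Rightarrow> real) \<Rightarrow> src \<Rightarrow> 'w \<Rightarrow> real" where
  "src_rv Q0 EA ES i = (case i of Init j \<Rightarrow> (\<lambda>w. real (Q0 j w))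
                                   | Arr j k \<Rightarrow> EA j k | Srv j k \<Rightarrow> ES j k)"

definition src_set :: "nat \<Rightarrow> src set" where
  "src_set J = {Init j | j. j \<in> {1..J}} \<union> {Arr j k | j k. j \<in> {1..J}}
               \<union> {Srv j k | j k. j \<in> {1..J}}"

definition alpha_bound :: "real \<Rightarrow> real \<Rightarrow> real" where
  "alpha_bound l mu = (let r = l / mu in
     (3 * (l + mu) * ln r - 2 * sqrt ((mu - l)^2 + 9 * l * mu * (ln r)^2))
       / (2 * (mu - l)^2 * ln r))"

end

theory Submission
  imports Defs
begin


lemma alpha_bound_ge:
  fixes l mu :: real
  assumes l: "0 < l" and lm: "l < mu"
  shows "alpha_bound l mu * (sqrt mu - sqrt l)^2 \<ge> 3/2"
proof -
  have mu: "0 < mu" using l lm by simp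
  define r where "r = l / mu"
  have r: "0 < r" "r < 1" using l lm mu by (auto simp: r_def)
  define L where "L = ln r"
  have L: "L < 0" using r by (simp add: L_def)
  have sl: "sqrt l < sqrt mu" using lm by simp
  have sqpos: "0 < sqrt l" using l by simp
  have hs: "sqrt ((mu - l)^2 + 9 * l * mu * L^2) \<ge> - 3 * sqrt (l * mu) * L"
  proof -
    have "- 3 * sqrt (l * mu) * L = sqrt (9 * l * mu * L^2)"
      using L l mu by (simp add: real_sqrt_mult real_sqrt_abs power2_eq_square)
    also have "\<dots> \<le> sqrt ((mu - l)^2 + 9 * l * mu * L^2)"
      by (rule real_sqrt_le_mono) simp
    finally show ?thesis by simp
  qed
  have lmu: "sqrt (l * mu) = sqrt l * sqrt mu" by (simp add: real_sqrt_mult)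
  have num: "3 * (l + mu) * L - 2 * sqrt ((mu - l)^2 + 9 * l * mu * L^2)
        \<le> 3 * L * (sqrt l + sqrt mu)^2"
  proof -
    have "(sqrt l + sqrt mu)^2 = l + mu + 2 * sqrt l * sqrt mu"
      using l mu by (simp add: power2_eq_square algebra_simps)
    then show ?thesis using hs lmu by (simp add: algebra_simps)
  qed
  have dpos: "0 < (mu - l)^2" using lm by simp
  have den: "2 * (mu - l)^2 * L < 0" using dpos L by (simp add: mult_pos_neg)
  have ab: "alpha_bound l mu = (3 * (l + mu) * L - 2 * sqrt ((mu - l)^2 + 9 * l * mu * L^2))
       / (2 * (mu - l)^2 * L)"
    by (simp add: alpha_bound_def Let_def r_def L_def)
  have "3 * L * (sqrt l + sqrt mu)^2 / (2 * (mu - l)^2 * L) \<le> alpha_bound l mu"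
    unfolding ab by (rule divide_right_mono_neg[OF num]) (use den in simp)
  moreover have "3 * L * (sqrt l + sqrt mu)^2 / (2 * (mu - l)^2 * L)
      = 3 / (2 * (sqrt mu - sqrt l)^2)"
  proof -
    have "mu - l = (sqrt mu - sqrt l) * (sqrt mu + sqrt l)"
      using l mu by (simp add: algebra_simps)
    then have "(mu - l)^2 = (sqrt mu - sqrt l)^2 * (sqrt l + sqrt mu)^2"
      by (metis add.commute power_mult_distrib)
    moreover have "sqrt l + sqrt mu > 0" using sqpos sl by linarith
    ultimately show ?thesis using L sl by (simp add: field_simps)
  qed
  ultimately have "3 / (2 * (sqrt mu - sqrt l)^2) \<le> alpha_bound l mu" by simp
  moreover have "0 < (sqrt mu - sqrt l)^2" using sl by simp
  ultimately show ?thesis by (simp add: field_simps)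
qed


lemma final_num:
  fixes beta x :: real and J m :: nat
  assumes beta: "beta > 1" and J: "J \<ge> 1" and m: "m \<ge> 1"
    and mC: "real m \<ge> exp (beta powr (1 / (beta - 1))) / (2 * real J)"
    and x: "x \<ge> (ln (2 * real J * real m)) powr beta"
  shows "real J * (2 * exp (- x)) \<le> 1 / real m powr beta"
proof -
  define L where "L = ln (2 * real J * real m)"
  define N where "N = 2 * real J * real m"
  have Npos: "N \<ge> 2"
  proof -
    have a: "(1::real) \<le> real J" "(1::real) \<le> real m" using J m by simp_all
    have "(1::real) * 1 \<le> real J * real m" by (rule mult_mono) (use a in auto)
    then have "real J * real m \<ge> 1" by simp
    then show ?thesis by (simp add: N_def)
  qed
  have Jp: "0 < 2 * real J" using J by simp
  have "exp (beta powr (1 / (beta - 1))) \<le> real m * (2 * real J)"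
    using mC by (simp only: pos_divide_le_eq[OF Jp])
  then have eN: "exp (beta powr (1 / (beta - 1))) \<le> N" by (simp add: N_def mult.commute mult.left_commute)
  have "ln (exp (beta powr (1 / (beta - 1)))) \<le> ln N"
    using eN Npos by (subst ln_le_cancel_iff) auto
  then have L1: "beta powr (1 / (beta - 1)) \<le> L" by (simp add: L_def N_def)
  have bpos: "beta powr (1 / (beta - 1)) > 0" using beta by simp
  have Lpos: "L > 0" using L1 bpos by linarith
  have "(beta powr (1 / (beta - 1))) powr (beta - 1) \<le> L powr (beta - 1)"
    using L1 bpos beta by (intro powr_mono2) auto
  moreover have "(beta powr (1 / (beta - 1))) powr (beta - 1) = beta"
    using beta by (simp add: powr_powr)
  ultimately have Lb: "beta \<le> L powr (beta - 1)" by simp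
  have "L powr beta = L * L powr (beta - 1)"
    using Lpos by (simp add: powr_diff powr_one field_simps)
  also have "\<dots> \<ge> L * beta" using Lb Lpos by simp
  finally have "x \<ge> beta * L" using x unfolding L_def by (simp add: mult.commute)
  then have "exp (- x) \<le> exp (- (beta * L))" by simp
  also have "exp (- (beta * L)) = 1 / N powr beta"
    using Npos J m by (simp add: L_def N_def powr_def exp_minus field_simps)
  finally have e: "exp (- x) \<le> 1 / N powr beta" .
  have NP: "N powr beta = (2 * real J) powr beta * real m powr beta"
    unfolding N_def by (simp add: powr_mult)
  have JJ: "2 * real J \<le> (2 * real J) powr beta"
  proof -
    have "(2 * real J) powr 1 \<le> (2 * real J) powr beta"
      using J beta by (intro powr_mono) auto
    then show ?thesis using J by simp
  qed
  have mp: "real m powr beta > 0" using m by simp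
  have Jp: "(2 * real J) powr beta > 0" using J by simp
  have "real J * (2 * exp (- x)) \<le> real J * (2 * (1 / N powr beta))"
    by (intro mult_left_mono e) auto
  also have "\<dots> = (2 * real J) / ((2 * real J) powr beta) * (1 / real m powr beta)"
    by (simp add: NP field_simps)
  also have "\<dots> \<le> 1 * (1 / real m powr beta)"
    using JJ Jp mp by (intro mult_right_mono) (auto simp: field_simps)
  finally show ?thesis by simp
qed


lemma sets_Collect_finite_nat:
  assumes P: "\<And>n. {w\<in>space M. P n w} \<in> sets M"
  shows "{w\<in>space M. finite {n::nat. P n w}} \<in> sets M"
proof -
  have "{w\<in>space M. finite {n::nat. P n w}} = (\<Union>N. \<Inter>n\<in>{N..}. {w\<in>space M. \<not> P n w})"
    apply (auto simp: finite_nat_set_iff_bounded_le)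
    subgoal for x m by (rule exI[of _ "Suc m"]) (auto simp: not_less_eq_eq[symmetric])
    subgoal for x N by (rule exI[of _ N]) (meson atLeast_iff nat_le_linear)
    done
  also have "\<dots> \<in> sets M" using P
    by (intro sets.countable_UN' sets.countable_INT') (auto simp: sets.Diff[of "space M", simplified] set_diff_eq)
  finally show ?thesis .
qed

lemma measurable_card_nat:
  assumes P: "\<And>n. {w\<in>space M. P n w} \<in> sets M"
  shows "(\<lambda>w. card {n::nat. P n w}) \<in> measurable M (count_space UNIV)"
proof (subst measurable_count_space_eq2_countable, safe)
  fix k :: nat
  have fin: "{w\<in>space M. finite {n::nat. P n w}} \<in> sets M" by (rule sets_Collect_finite_nat[OF P])
  have eq: "(\<lambda>w. card {n. P n w}) -` {k} \<inter> space M =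
      (\<Union>F\<in>{F::nat set. finite F \<and> card F = k}. \<Inter>n. {w\<in>space M. P n w \<longleftrightarrow> n \<in> F})
      \<union> (if k = 0 then space M - {w\<in>space M. finite {n::nat. P n w}} else {})"
  proof (intro equalityI subsetI)
    fix w assume w: "w \<in> (\<lambda>w. card {n. P n w}) -` {k} \<inter> space M"
    show "w \<in> (\<Union>F\<in>{F::nat set. finite F \<and> card F = k}. \<Inter>n. {w\<in>space M. P n w \<longleftrightarrow> n \<in> F})
      \<union> (if k = 0 then space M - {w\<in>space M. finite {n::nat. P n w}} else {})"
    proof (cases "finite {n. P n w}")
      case True
      then show ?thesis using w by (intro UnI1 UN_I[of "{n. P n w}"]) auto
    next
      case False
      then show ?thesis using w by auto
    qed
  next
    fix w assume "w \<in> (\<Union>F\<in>{F::nat set. finite F \<and> card F = k}. \<Inter>n. {w\<in>space M. P n w \<longleftrightarrow> n \<in> F})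
      \<union> (if k = 0 then space M - {w\<in>space M. finite {n::nat. P n w}} else {})"
    then show "w \<in> (\<lambda>w. card {n. P n w}) -` {k} \<inter> space M"
    proof
      assume "w \<in> (\<Union>F\<in>{F::nat set. finite F \<and> card F = k}. \<Inter>n. {w\<in>space M. P n w \<longleftrightarrow> n \<in> F})"
      then obtain F where "finite F" "card F = k" "\<And>n. P n w \<longleftrightarrow> n \<in> F" "w \<in> space M" by auto
      moreover then have "{n. P n w} = F" by auto
      ultimately show ?thesis by auto
    next
      assume "w \<in> (if k = 0 then space M - {w\<in>space M. finite {n::nat. P n w}} else {})"
      then show ?thesis by (auto split: if_splits)
    qed
  qed
  have c: "countable {F::nat set. finite F \<and> card F = k}"
    by (rule countable_subset[OF _ countable_Collect_finite]) auto
  have iff: "{w\<in>space M. P n w \<longleftrightarrow> n \<in> F} \<in> sets M" for n F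
  proof (cases "n \<in> F")
    case True then show ?thesis using P[of n] by simp
  next
    case False
    then have "{w\<in>space M. P n w \<longleftrightarrow> n \<in> F} = space M - {w\<in>space M. P n w}" by auto
    then show ?thesis using P[of n] by auto
  qed
  show "(\<lambda>w. card {n. P n w}) -` {k} \<inter> space M \<in> sets M"
    unfolding eq using fin c iff
    by (intro sets.Un sets.countable_UN' sets.countable_INT') auto
qed simp


lemma int_Inf_nomin:
  fixes S :: "int set"
  assumes "\<not> (\<exists>m\<in>S. \<forall>v\<in>S. m \<le> v)"
  shows "Inf S = Inf ({}::int set)"
proof -
  have "(\<lambda>x. x \<in> uminus ` S \<and> (\<forall>y\<in>uminus ` S. y \<le> x)) = (\<lambda>x. x \<in> uminus ` ({}::int set) \<and> (\<forall>y\<in>uminus ` {}. y \<le> x))"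
  proof
    fix x
    show "(x \<in> uminus ` S \<and> (\<forall>y\<in>uminus ` S. y \<le> x)) = (x \<in> uminus ` ({}::int set) \<and> (\<forall>y\<in>uminus ` {}. y \<le> x))"
      using assms by auto
  qed
  then show ?thesis unfolding Inf_int_def Sup_int_def by simp
qed

lemma int_Inf_min:
  fixes S :: "int set"
  assumes "m \<in> S" "\<forall>v\<in>S. m \<le> v"
  shows "Inf S = m"
  using assms by (intro cInf_eq_minimum) auto

lemma measurable_Inf_int:
  fixes G :: "'i \<Rightarrow> 'w \<Rightarrow> int" and ok :: "'i \<Rightarrow> 'w \<Rightarrow> bool"
  assumes I: "countable I" and G: "\<And>i. i \<in> I \<Longrightarrow> G i \<in> measurable M (count_space UNIV)"
    and ok: "\<And>i. i \<in> I \<Longrightarrow> {w\<in>space M. ok i w} \<in> sets M"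
  shows "(\<lambda>w. Inf {G i w | i. i \<in> I \<and> ok i w}) \<in> measurable M (count_space UNIV)"
proof (subst measurable_count_space_eq2_countable, safe)
  define S where "S w = {G i w | i. i \<in> I \<and> ok i w}" for w
  have Gk: "{w\<in>space M. G i w = k} \<in> sets M" if "i \<in> I" for i k
    using G[OF that] by (simp add: measurable_count_space_eq2_countable vimage_def Int_def conj_commute)
  have Gle: "{w\<in>space M. k \<le> G i w} \<in> sets M" if "i \<in> I" for i k
  proof -
    have "{w\<in>space M. k \<le> G i w} = G i -` {k..} \<inter> space M" by auto
    then show ?thesis using measurable_sets[OF G[OF that], of "{k..}"] by simp
  qed
  have mem: "{w\<in>space M. k \<in> S w} \<in> sets M" for k
  proof -
    have "{w\<in>space M. k \<in> S w} = (\<Union>i\<in>I. {w\<in>space M. ok i w} \<inter> {w\<in>space M. G i w = k})"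
      by (auto simp: S_def)
    then show ?thesis using I ok Gk by (auto intro!: sets.countable_UN')
  qed
  have lb: "{w\<in>space M. \<forall>v\<in>S w. k \<le> v} \<in> sets M" for k
  proof -
    have "{w\<in>space M. \<forall>v\<in>S w. k \<le> v} = space M \<inter> (\<Inter>i\<in>I. (space M - {w\<in>space M. ok i w}) \<union> {w\<in>space M. k \<le> G i w})"
      by (auto simp: S_def)
    then show ?thesis using I ok Gle by (cases "I = {}") (auto intro!: sets.countable_INT')
  qed
  have both: "{w\<in>space M. k \<in> S w \<and> (\<forall>v\<in>S w. k \<le> v)} \<in> sets M" for k
  proof -
    have "{w\<in>space M. k \<in> S w \<and> (\<forall>v\<in>S w. k \<le> v)} = {w\<in>space M. k \<in> S w} \<inter> {w\<in>space M. \<forall>v\<in>S w. k \<le> v}" by blast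
    then show ?thesis using sets.Int[OF mem[of k] lb[of k]] by simp
  qed
  fix k :: int
  have "(\<lambda>w. Inf (S w)) -` {k} \<inter> space M = {w\<in>space M. k \<in> S w \<and> (\<forall>v\<in>S w. k \<le> v)}
     \<union> (if Inf ({}::int set) = k then space M - (\<Union>m. {w\<in>space M. m \<in> S w \<and> (\<forall>v\<in>S w. m \<le> v)}) else {})"
  proof (intro equalityI subsetI)
    fix w assume w: "w \<in> (\<lambda>w. Inf (S w)) -` {k} \<inter> space M"
    show "w \<in> {w\<in>space M. k \<in> S w \<and> (\<forall>v\<in>S w. k \<le> v)}
     \<union> (if Inf ({}::int set) = k then space M - (\<Union>m. {w\<in>space M. m \<in> S w \<and> (\<forall>v\<in>S w. m \<le> v)}) else {})"
    proof (cases "\<exists>m\<in>S w. \<forall>v\<in>S w. m \<le> v")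
      case True
      then obtain m where "m \<in> S w" "\<forall>v\<in>S w. m \<le> v" by blast
      moreover then have "Inf (S w) = m" by (rule int_Inf_min)
      ultimately show ?thesis using w by auto
    next
      case False
      then have "Inf (S w) = Inf {}" by (rule int_Inf_nomin)
      then show ?thesis using w False by auto
    qed
  next
    fix w assume "w \<in> {w\<in>space M. k \<in> S w \<and> (\<forall>v\<in>S w. k \<le> v)}
     \<union> (if Inf ({}::int set) = k then space M - (\<Union>m. {w\<in>space M. m \<in> S w \<and> (\<forall>v\<in>S w. m \<le> v)}) else {})"
    then show "w \<in> (\<lambda>w. Inf (S w)) -` {k} \<inter> space M"
    proof
      assume "w \<in> {w\<in>space M. k \<in> S w \<and> (\<forall>v\<in>S w. k \<le> v)}"
      then show ?thesis using int_Inf_min[of k "S w"] by auto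
    next
      assume "w \<in> (if Inf ({}::int set) = k then space M - (\<Union>m. {w\<in>space M. m \<in> S w \<and> (\<forall>v\<in>S w. m \<le> v)}) else {})"
      then show ?thesis using int_Inf_nomin[of "S w"] by (auto split: if_splits)
    qed
  qed
  moreover have "\<dots> \<in> sets M" using both by (auto intro!: sets.Un sets.Diff sets.countable_UN')
  ultimately show "(\<lambda>w. Inf {G i w | i. i \<in> I \<and> ok i w}) -` {k} \<inter> space M \<in> sets M"
    unfolding S_def by simp
qed simp


definition thr :: "(nat \<Rightarrow> real) \<Rightarrow> real" where
  "thr S = real_of_ereal (SUP (q::real)\<in>\<rat>. if finite {n. S n \<le> q} then ereal q else - \<infinity>)"

lemma thr_eq:
  fixes S :: "nat \<Rightarrow> real"
  assumes fin: "finite {n. S n \<le> s}" and inf: "\<And>s1. s1 > s \<Longrightarrow> infinite {n. S n \<le> s1}"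
  shows "thr S = s"
proof -
  have "(SUP (q::real)\<in>\<rat>. if finite {n. S n \<le> q} then ereal q else - \<infinity>) = ereal s"
  proof (rule SUP_eqI)
    fix q :: real assume "q \<in> \<rat>"
    show "(if finite {n. S n \<le> q} then ereal q else - \<infinity>) \<le> ereal s"
      using inf[of q] by (cases "q \<le> s") auto
  next
    fix y assume ub: "\<And>q::real. q \<in> \<rat> \<Longrightarrow> (if finite {n. S n \<le> q} then ereal q else - \<infinity>) \<le> y"
    show "ereal s \<le> y"
    proof (rule dense_le)
      fix x assume x: "x < ereal s"
      show "x \<le> y"
      proof (cases x)
        case (real r)
        then have "r < s" using x by simp
        then obtain q where q: "q \<in> \<rat>" "r < q" "q < s" using Rats_dense_in_real by blast
        have "finite {n. S n \<le> q}"
          by (rule finite_subset[OF _ fin]) (use q in auto)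
        then have "ereal q \<le> y" using ub[OF q(1)] by simp
        then show ?thesis using real q by (meson ereal_less_eq(3) less_imp_le order_trans)
      qed (use x in auto)
    qed
  qed
  then show ?thesis by (simp add: thr_def)
qed

lemma right_const:
  fixes S :: "nat \<Rightarrow> real"
  assumes "s \<noteq> thr S"
  shows "\<exists>d>0. \<forall>s'. s \<le> s' \<and> s' < s + d \<longrightarrow> card {n. S n \<le> s'} = card {n. S n \<le> s}"
proof (cases "finite {n. S n \<le> s}")
  case False
  have "infinite {n. S n \<le> s'}" if "s \<le> s'" for s'
    using False by (rule contrapos_nn) (rule finite_subset[of _ "{n. S n \<le> s'}"], use that in auto)
  then show ?thesis using False by (intro exI[of _ 1]) auto
next
  case fin: True
  show ?thesis
  proof (cases "\<exists>s1>s. finite {n. S n \<le> s1}")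
    case False
    then have "thr S = s" using fin by (intro thr_eq) auto
    then show ?thesis using assms by simp
  next
    case True
    then obtain s1 where s1: "s1 > s" "finite {n. S n \<le> s1}" by blast
    define D where "D = insert (s1 - s) ((\<lambda>n. S n - s) ` {n. S n \<le> s1 \<and> s < S n})"
    have Dfin: "finite D" unfolding D_def using s1(2)
      by (intro finite_insert[THEN iffD2] finite_imageI) (rule finite_subset[of _ "{n. S n \<le> s1}"], auto)
    define d where "d = Min D"
    have dpos: "d > 0" unfolding d_def using Dfin s1(1) by (subst Min_gr_iff) (simp_all add: D_def)
    have dle: "d \<le> x" if "x \<in> D" for x unfolding d_def using Dfin that by simp
    have eq: "{n. S n \<le> s'} = {n. S n \<le> s}" if "s \<le> s'" "s' < s + d" for s'
    proof (intro equalityI subsetI)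
      fix n assume n: "n \<in> {n. S n \<le> s'}"
      show "n \<in> {n. S n \<le> s}"
      proof (rule ccontr)
        assume "n \<notin> {n. S n \<le> s}"
        then have gt: "s < S n" by simp
        have "s1 - s \<in> D" unfolding D_def by blast
        then have "d \<le> s1 - s" using dle by blast
        then have sn1: "S n \<le> s1" using n that by simp
        have "S n - s \<in> D" unfolding D_def using gt sn1 by blast
        then have "d \<le> S n - s" using dle by blast
        then show False using n that by simp
      qed
    qed (use that in auto)
    show ?thesis
    proof (intro exI[of _ d] conjI allI impI)
      fix s' assume "s \<le> s' \<and> s' < s + d"
      then have "{n. S n \<le> s'} = {n. S n \<le> s}" using eq by blast
      then show "card {n. S n \<le> s'} = card {n. S n \<le> s}" by (rule arg_cong)
    qed (rule dpos)
  qed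
qed

lemma measurable_thr:
  assumes S: "\<And>n. (\<lambda>w. S n w) \<in> borel_measurable M"
  shows "(\<lambda>w. thr (\<lambda>n. S n w)) \<in> borel_measurable M"
proof -
  have fin: "{w\<in>space M. finite {n. S n w \<le> q}} \<in> sets M" for q
  proof -
    have "{w\<in>space M. finite {n. S n w \<le> q}} = (\<Union>N. \<Inter>n\<in>{N..}. {w\<in>space M. q < S n w})"
      apply (auto simp: finite_nat_set_iff_bounded_le)
      subgoal for x m by (rule exI[of _ "Suc m"]) (auto, meson not_le not_less_eq_eq)
      subgoal for x N by (rule exI[of _ N]) (metis atLeast_iff nat_le_linear not_less)
      done
    also have "\<dots> \<in> sets M"
    proof -
      have m: "{w\<in>space M. q < S n w} \<in> sets M" for n using S[of n] by measurable
      have "(\<Inter>n\<in>{N..}. {w\<in>space M. q < S n w}) \<in> sets M" for N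
        by (rule sets.countable_INT') (simp_all add: m image_subset_iff)
      then show ?thesis by (intro sets.countable_UN') (simp_all add: image_subset_iff)
    qed
    finally show ?thesis .
  qed
  have "(\<lambda>w. SUP (q::real)\<in>\<rat>. if finite {n. S n w \<le> q} then ereal q else - \<infinity>) \<in> borel_measurable M"
  proof (intro borel_measurable_SUP countable_rat)
    fix q :: real
    show "(\<lambda>w. if finite {n. S n w \<le> q} then ereal q else - \<infinity>) \<in> borel_measurable M"
      by (rule measurable_If[OF measurable_const measurable_const fin]) simp_all
  qed
  then show ?thesis unfolding thr_def by (rule borel_measurable_real_of_ereal)
qed


lemma img_countable:
  fixes SA SS :: "nat \<Rightarrow> real" and F :: "real \<Rightarrow> int"
  assumes F: "\<And>s. F s = int q0 + int (card {n. SA n \<le> s}) - int (card {n. SS n \<le> s})"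
  shows "F ` {0..t} = F ` ({0..t} \<inter> insert t (\<rat> \<union> {thr SA, thr SS}))"
proof (intro equalityI subsetI)
  fix y assume "y \<in> F ` {0..t}"
  then obtain s where s: "s \<in> {0..t}" "y = F s" by blast
  show "y \<in> F ` ({0..t} \<inter> insert t (\<rat> \<union> {thr SA, thr SS}))"
  proof (cases "s \<in> insert t (\<rat> \<union> {thr SA, thr SS})")
    case True then show ?thesis using s by blast
  next
    case False
    then have st: "s < t" "s \<noteq> thr SA" "s \<noteq> thr SS" using s by auto
    obtain dA where dA: "dA > 0" "\<And>s'. s \<le> s' \<and> s' < s + dA \<Longrightarrow> card {n. SA n \<le> s'} = card {n. SA n \<le> s}"
      using right_const[OF st(2)] by blast
    obtain dS where dS: "dS > 0" "\<And>s'. s \<le> s' \<and> s' < s + dS \<Longrightarrow> card {n. SS n \<le> s'} = card {n. SS n \<le> s}"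
      using right_const[OF st(3)] by blast
    define d where "d = min (min dA dS) (t - s)"
    have d: "d > 0" using dA dS st by (simp add: d_def)
    obtain q where q: "q \<in> \<rat>" "s < q" "q < s + d" using Rats_dense_in_real[of s "s + d"] d by auto
    have qs: "F q = F s" unfolding F using dA(2)[of q] dS(2)[of q] q by (simp add: d_def)
    have "q \<in> {0..t} \<inter> insert t (\<rat> \<union> {thr SA, thr SS})" using q s by (auto simp: d_def)
    then show ?thesis using qs s by (metis image_eqI)
  qed
qed auto


lemma measurable_cs2:
  fixes f :: "'w \<Rightarrow> 'a::countable" and g :: "'w \<Rightarrow> 'b::countable"
  assumes f: "f \<in> measurable M (count_space UNIV)" and g: "g \<in> measurable M (count_space UNIV)"
  shows "(\<lambda>w. h (f w) (g w)) \<in> measurable M (count_space UNIV)"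
proof -
  have "(\<lambda>w. (f w, g w)) \<in> measurable M (count_space UNIV \<Otimes>\<^sub>M count_space UNIV)"
    using f g by (rule measurable_Pair)
  then have p: "(\<lambda>w. (f w, g w)) \<in> measurable M (count_space UNIV)"
    by (simp add: pair_measure_countable)
  have "(\<lambda>x. h (fst x) (snd x)) \<in> measurable (count_space UNIV) (count_space UNIV)" by simp
  from measurable_compose[OF p this] show ?thesis by simp
qed

definition ptsI :: "real \<Rightarrow> (real + bool) set" where
  "ptsI t = Inl ` insert t \<rat> \<union> Inr ` UNIV"

definition ptsp :: "(nat \<Rightarrow> real) \<Rightarrow> (nat \<Rightarrow> real) \<Rightarrow> real + bool \<Rightarrow> real" where
  "ptsp SA SS i = (case i of Inl r \<Rightarrow> r | Inr b \<Rightarrow> (if b then thr SA else thr SS))"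

lemma countable_ptsI: "countable (ptsI t)"
  unfolding ptsI_def by (intro countable_Un countable_image countable_insert countable_rat) simp

lemma ptsp_img:
  "{F (ptsp SA SS i) | i. i \<in> ptsI t \<and> ptsp SA SS i \<in> {0..t}} = F ` ({0..t} \<inter> insert t (\<rat> \<union> {thr SA, thr SS}))"
proof (intro equalityI subsetI)
  fix y assume "y \<in> {F (ptsp SA SS i) | i. i \<in> ptsI t \<and> ptsp SA SS i \<in> {0..t}}"
  then obtain i where "i \<in> ptsI t" "ptsp SA SS i \<in> {0..t}" "y = F (ptsp SA SS i)" by blast
  then show "y \<in> F ` ({0..t} \<inter> insert t (\<rat> \<union> {thr SA, thr SS}))"
    by (auto simp: ptsI_def ptsp_def split: if_splits)
next
  fix y assume "y \<in> F ` ({0..t} \<inter> insert t (\<rat> \<union> {thr SA, thr SS}))"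
  then obtain s where s: "s \<in> {0..t}" "s \<in> insert t (\<rat> \<union> {thr SA, thr SS})" "y = F s" by blast
  then consider "s \<in> insert t \<rat>" | "s = thr SA" | "s = thr SS" by blast
  then show "y \<in> {F (ptsp SA SS i) | i. i \<in> ptsI t \<and> ptsp SA SS i \<in> {0..t}}"
  proof cases
    case 1 then show ?thesis using s by (intro CollectI exI[of _ "Inl s"]) (auto simp: ptsI_def ptsp_def)
  next
    case 2 then show ?thesis using s by (intro CollectI exI[of _ "Inr True"]) (auto simp: ptsI_def ptsp_def)
  next
    case 3 then show ?thesis using s by (intro CollectI exI[of _ "Inr False"]) (auto simp: ptsI_def ptsp_def)
  qed
qed

lemma measurable_queue_len:
  fixes EA ES :: "nat \<Rightarrow> 'w \<Rightarrow> real" and Q :: "'w \<Rightarrow> nat"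
  assumes EA: "\<And>k. EA k \<in> borel_measurable M" and ES: "\<And>k. ES k \<in> borel_measurable M"
    and Q: "Q \<in> measurable M (count_space UNIV)"
  shows "(\<lambda>w. queue_len (Q w) (\<lambda>k. EA k w) (\<lambda>k. ES k w) t) \<in> measurable M (count_space UNIV)"
proof -
  define SA where "SA w n = (\<Sum>k\<le>n. EA k w)" for w n
  define SS where "SS w n = (\<Sum>k\<le>n. ES k w)" for w n
  have SAm: "(\<lambda>w. SA w n) \<in> borel_measurable M" for n unfolding SA_def using EA by measurable
  have SSm: "(\<lambda>w. SS w n) \<in> borel_measurable M" for n unfolding SS_def using ES by measurable
  define F where "F w s = netput (Q w) (\<lambda>k. EA k w) (\<lambda>k. ES k w) s" for w s
  have F: "F w s = int (Q w) + int (card {n. SA w n \<le> s}) - int (card {n. SS w n \<le> s})" for w s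
    by (simp add: F_def netput_def count_proc_def SA_def SS_def)
  have cardm: "(\<lambda>w. card {n. S w n \<le> p w}) \<in> measurable M (count_space UNIV)"
    if "\<And>n. (\<lambda>w. S w n) \<in> borel_measurable M" "p \<in> borel_measurable M" for S :: "'w \<Rightarrow> nat \<Rightarrow> real" and p
    by (rule measurable_card_nat[where P="\<lambda>n w. S w n \<le> p w", simplified]) (use that in measurable)
  have pm: "(\<lambda>w. ptsp (SA w) (SS w) i) \<in> borel_measurable M" for i
  proof (cases i)
    case (Inl r) then show ?thesis by (simp add: ptsp_def)
  next
    case (Inr b)
    have "(\<lambda>w. thr (\<lambda>n. SA w n)) \<in> borel_measurable M" by (rule measurable_thr) (rule SAm)
    moreover have "(\<lambda>w. thr (\<lambda>n. SS w n)) \<in> borel_measurable M" by (rule measurable_thr) (rule SSm)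
    ultimately show ?thesis using Inr by (cases b) (simp_all add: ptsp_def)
  qed
  have Gm: "(\<lambda>w. F w (ptsp (SA w) (SS w) i)) \<in> measurable M (count_space UNIV)" for i
  proof -
    have a: "(\<lambda>w. card {n. SA w n \<le> ptsp (SA w) (SS w) i}) \<in> measurable M (count_space UNIV)"
      by (rule cardm[OF SAm pm])
    have b: "(\<lambda>w. card {n. SS w n \<le> ptsp (SA w) (SS w) i}) \<in> measurable M (count_space UNIV)"
      by (rule cardm[OF SSm pm])
    have c: "(\<lambda>w. (Q w, card {n. SA w n \<le> ptsp (SA w) (SS w) i})) \<in> measurable M (count_space UNIV)"
      by (rule measurable_cs2[OF Q a, where h=Pair])
    show ?thesis unfolding F
      by (rule measurable_cs2[OF c b, where h="\<lambda>x y. int (fst x) + int (snd x) - int y", simplified])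
  qed
  have okm: "{w\<in>space M. ptsp (SA w) (SS w) i \<in> {0..t}} \<in> sets M" for i
    using pm[of i] by measurable
  have Infm: "(\<lambda>w. Inf {F w (ptsp (SA w) (SS w) i) | i. i \<in> ptsI t \<and> ptsp (SA w) (SS w) i \<in> {0..t}})
      \<in> measurable M (count_space UNIV)"
    by (rule measurable_Inf_int[OF countable_ptsI Gm okm])
  have "Inf (F w ` {0..t}) = Inf {F w (ptsp (SA w) (SS w) i) | i. i \<in> ptsI t \<and> ptsp (SA w) (SS w) i \<in> {0..t}}" for w
    unfolding ptsp_img by (subst img_countable[OF F]) (rule refl)
  then have Infm2: "(\<lambda>w. Inf (F w ` {0..t})) \<in> measurable M (count_space UNIV)"
    using Infm by simp
  have Ftm: "(\<lambda>w. F w t) \<in> measurable M (count_space UNIV)"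
  proof -
    have "(\<lambda>w. F w (ptsp (SA w) (SS w) (Inl t))) \<in> measurable M (count_space UNIV)" by (rule Gm)
    then show ?thesis by (simp add: ptsp_def)
  qed
  have "(\<lambda>w. F w t - min 0 (Inf (F w ` {0..t}))) \<in> measurable M (count_space UNIV)"
    by (rule measurable_cs2[OF Ftm Infm2])
  then show ?thesis unfolding queue_len_def F_def[symmetric] by simp
qed

lemma sets_eq_count:
  fixes f g :: "'w \<Rightarrow> 'a::countable"
  assumes f: "f \<in> measurable M (count_space UNIV)" and g: "g \<in> measurable M (count_space UNIV)"
  shows "{w\<in>space M. f w = g w} \<in> sets M"
proof -
  have "(\<lambda>w. f w = g w) \<in> measurable M (count_space UNIV)" by (rule measurable_cs2[OF f g])
  then have "(\<lambda>w. f w = g w) -` {True} \<inter> space M \<in> sets M" by (rule measurable_sets) simp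
  moreover have "(\<lambda>w. f w = g w) -` {True} \<inter> space M = {w\<in>space M. f w = g w}" by auto
  ultimately show ?thesis by simp
qed


lemma downclosed_finite_nat:
  fixes A :: "nat set"
  assumes fin: "finite A" and dc: "\<And>m n. m \<le> n \<Longrightarrow> n \<in> A \<Longrightarrow> m \<in> A"
  shows "A = {..<card A}"
proof -
  have ex: "\<exists>n. n \<notin> A" using fin by (meson ex_new_if_finite infinite_UNIV_nat)
  define K where "K = (LEAST n. n \<notin> A)"
  have K: "K \<notin> A" unfolding K_def using ex by (rule LeastI_ex)
  have "A = {..<K}"
  proof (intro equalityI subsetI)
    fix n assume "n \<in> A"
    then show "n \<in> {..<K}" using dc[of K n] K by (cases "K \<le> n") auto
  next
    fix n assume "n \<in> {..<K}"
    then show "n \<in> A" unfolding K_def using not_less_Least by auto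
  qed
  then show ?thesis by simp
qed

context prob_space begin

lemma poisson_facts:
  fixes E :: "nat \<Rightarrow> 'a \<Rightarrow> real" and r t c :: real
  assumes r: "0 < r" and t: "0 \<le> t" and c: "0 \<le> c"
    and D: "\<And>k. distributed M lborel (E k) (exponential_density r)"
    and ind: "indep_vars (\<lambda>_. borel) E UNIV"
  shows "(\<integral>\<^sup>+w. ennreal (c ^ card {n. (\<Sum>k\<le>n. E k w) \<le> t}) \<partial>M) = ennreal (exp (r * t * (c - 1)))"
    and "AE w in M. (\<forall>k. 0 < E k w) \<and> finite {n. (\<Sum>k\<le>n. E k w) \<le> t}"
proof -
  define S where "S n w = (\<Sum>k\<le>n. E k w)" for n w
  have Em[measurable]: "E k \<in> borel_measurable M" for k
    using distributed_measurable[OF D[of k]] by simp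
  have Sm[measurable]: "(\<lambda>w. S n w) \<in> borel_measurable M" for n
    unfolding S_def by measurable
  have Sdist: "distributed M lborel (S n) (erlang_density n r)" for n
  proof -
    have "distributed M lborel (\<lambda>x. \<Sum>i\<in>{..n}. E i x) (erlang_density (card {..n} - 1) r)"
      by (rule exponential_distributed_sum[OF _ _ r D indep_vars_subset[OF ind]]) auto
    then show ?thesis by (simp add: S_def[abs_def])
  qed
  have PA: "prob {w\<in>space M. S n w \<le> t} = erlang_CDF n r t" for n
    using erlang_distributed_le[OF Sdist r t] by simp
  define pos where "pos = {w\<in>space M. \<forall>i. 0 < E i w}"
  have pos_m[measurable]: "pos \<in> sets M" unfolding pos_def by measurable
  have AEpos: "AE w in M. \<forall>i. 0 < E i w"
  proof (subst AE_all_countable, intro allI)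
    fix i
    have "prob {w\<in>space M. E i w \<le> 0} = 0"
      using exponential_distributedD_le[OF D[of i] _ r, of 0] by simp
    then have "emeasure M {w\<in>space M. E i w \<le> 0} = 0" by (simp add: emeasure_eq_measure)
    then show "AE w in M. 0 < E i w"
      by (subst AE_iff_measurable[of "{w\<in>space M. E i w \<le> 0}"]) (auto simp: not_less)
  qed
  have mono: "S m w \<le> S n w" if "m \<le> n" "\<forall>i. 0 < E i w" for m n w
  proof -
    have "S n w = S m w + (\<Sum>k\<in>{Suc m..n}. E k w)"
      unfolding S_def using that(1)
      by (metis (no_types, lifting) Suc_le_mono atLeast0AtMost sum.atLeastLessThan_concat le0 atLeastLessThanSuc_atLeastAtMost)
    moreover have "0 \<le> (\<Sum>k\<in>{Suc m..n}. E k w)" using that(2) by (intro sum_nonneg) (simp add: less_imp_le)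
    ultimately show ?thesis by simp
  qed
  have dc: "m \<in> {n. S n w \<le> t}" if "m \<le> n" "n \<in> {n. S n w \<le> t}" "\<forall>i. 0 < E i w" for m n w
    using mono[OF that(1) that(3)] that(2) by simp
  define Dk where "Dk k = {w\<in>space M. (\<forall>i. 0 < E i w) \<and> (k = 0 \<or> S (k - 1) w \<le> t) \<and> t < S k w}" for k
  have Dk_m[measurable]: "Dk k \<in> sets M" for k unfolding Dk_def by measurable
  have Dk_set: "{n. S n w \<le> t} = {..<k}" if "w \<in> Dk k" for w k
  proof (intro equalityI subsetI)
    fix n assume n: "n \<in> {n. S n w \<le> t}"
    show "n \<in> {..<k}"
    proof (rule ccontr)
      assume "n \<notin> {..<k}"
      then have "k \<le> n" by simp
      then have "S k w \<le> S n w" using mono that by (auto simp: Dk_def)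
      then show False using n that by (auto simp: Dk_def)
    qed
  next
    fix n assume n: "n \<in> {..<k}"
    then have "k \<noteq> 0" "n \<le> k - 1" by auto
    then have "S n w \<le> S (k - 1) w" using mono that by (auto simp: Dk_def)
    then show "n \<in> {n. S n w \<le> t}" using that \<open>k \<noteq> 0\<close> by (auto simp: Dk_def)
  qed
  have Dk_card: "card {n. S n w \<le> t} = k" if "w \<in> Dk k" for w k
    using Dk_set[OF that] by simp
  have disj: "disjoint_family Dk"
    unfolding disjoint_family_on_def using Dk_card by blast
  define bad where "bad = {w\<in>pos. \<not> finite {n. S n w \<le> t}}"
  have bad_m: "bad \<in> sets M"
  proof -
    have "{w\<in>space M. finite {n. S n w \<le> t}} \<in> sets M"
      by (rule sets_Collect_finite_nat) measurable
    then have "pos - {w\<in>space M. finite {n. S n w \<le> t}} \<in> sets M" by auto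
    moreover have "bad = pos - {w\<in>space M. finite {n. S n w \<le> t}}"
      unfolding bad_def pos_def by auto
    ultimately show ?thesis by simp
  qed
  have bad_sub: "bad \<subseteq> {w\<in>space M. S k w \<le> t}" for k
  proof
    fix w assume w: "w \<in> bad"
    then have inf: "infinite {n. S n w \<le> t}" and p: "\<forall>i. 0 < E i w" and ws: "w \<in> space M"
      by (auto simp: bad_def pos_def)
    obtain n where "n \<ge> k" "n \<in> {n. S n w \<le> t}" using inf by (meson infinite_nat_iff_unbounded_le)
    then have "k \<in> {n. S n w \<le> t}" using dc p by blast
    then show "w \<in> {w\<in>space M. S k w \<le> t}" using ws by simp
  qed
  have pois_sum: "(\<lambda>n. (r * t) ^ n / fact n) sums exp (r * t)"
    using exp_converges[of "r * t"] by (simp add: divide_inverse_commute scaleR_conv_of_real)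
  have cdf_lim: "(\<lambda>k. erlang_CDF k r t) \<longlonglongrightarrow> 0"
  proof -
    have "(\<lambda>k. \<Sum>n<k. (r * t) ^ n / fact n) \<longlonglongrightarrow> exp (r * t)"
      using pois_sum by (simp add: sums_def)
    then have "(\<lambda>k. \<Sum>n<Suc k. (r * t) ^ n / fact n) \<longlonglongrightarrow> exp (r * t)"
      by (rule LIMSEQ_Suc)
    then have "(\<lambda>k. 1 - (\<Sum>n\<le>k. (r * t) ^ n / fact n) * exp (- r * t)) \<longlonglongrightarrow> 1 - exp (r * t) * exp (- r * t)"
      by (simp add: lessThan_Suc_atMost) (intro tendsto_intros)
    moreover have "exp (r * t) * exp (- r * t) = 1" by (simp add: exp_minus)
    ultimately show ?thesis using t
      by (simp add: erlang_CDF_def sum_distrib_right mult.assoc)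
  qed
  have "measure M bad \<le> 0"
  proof (rule LIMSEQ_le_const[OF cdf_lim], intro exI allI impI)
    fix k show "measure M bad \<le> erlang_CDF k r t"
      using finite_measure_mono[OF bad_sub[of k]] PA[of k] by simp
  qed
  then have "emeasure M bad = 0" by (simp add: emeasure_eq_measure measure_nonneg antisym)
  then have AEfin: "AE w in M. \<not> (w \<in> bad)"
    using bad_m by (subst AE_iff_measurable[of bad]) (auto simp: bad_def pos_def)
  show AEgood: "AE w in M. (\<forall>k. 0 < E k w) \<and> finite {n. (\<Sum>k\<le>n. E k w) \<le> t}"
    using AEpos AEfin AE_space by eventually_elim (auto simp: bad_def pos_def S_def)
  have AEcover: "AE w in M. \<exists>k. w \<in> Dk k"
    using AEgood AE_space
  proof eventually_elim
    case (elim w)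
    then have p: "\<forall>i. 0 < E i w" and fin: "finite {n. S n w \<le> t}" and ws: "w \<in> space M"
      by (auto simp: S_def)
    define k where "k = card {n. S n w \<le> t}"
    have eq: "{n. S n w \<le> t} = {..<k}"
      unfolding k_def by (rule downclosed_finite_nat[OF fin]) (use dc p in blast)
    have "k \<notin> {n. S n w \<le> t}" using eq by simp
    moreover have "k = 0 \<or> k - 1 \<in> {n. S n w \<le> t}" using eq by (cases k) auto
    ultimately have "w \<in> Dk k" using p ws by (auto simp: Dk_def not_le)
    then show ?case by blast
  qed
  define pois where "pois k = (r * t) ^ k / fact k * exp (- r * t)" for k
  have PD: "measure M (Dk k) = pois k" for k
  proof (cases k)
    case 0
    have "AE w in M. w \<in> Dk 0 \<longleftrightarrow> w \<in> {w\<in>space M. t < S 0 w}"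
      using AEpos by eventually_elim (auto simp: Dk_def)
    then have "measure M (Dk 0) = measure M {w\<in>space M. t < S 0 w}"
      by (rule measure_eq_AE) auto
    also have "\<dots> = 1 - erlang_CDF 0 r t"
      using erlang_distributed_gt[OF Sdist[of 0] r t] by simp
    also have "\<dots> = pois 0" using t by (simp add: erlang_CDF_def pois_def)
    finally show ?thesis using 0 by simp
  next
    case (Suc j)
    have "AE w in M. w \<in> Dk k \<longleftrightarrow> w \<in> {w\<in>space M. S j w \<le> t} - {w\<in>space M. S k w \<le> t}"
      using AEpos by eventually_elim (auto simp: Dk_def Suc not_le)
    then have "measure M (Dk k) = measure M ({w\<in>space M. S j w \<le> t} - {w\<in>space M. S k w \<le> t})"
      by (rule measure_eq_AE) auto
    also have "\<dots> = measure M {w\<in>space M. S j w \<le> t} - measure M ({w\<in>space M. S j w \<le> t} \<inter> {w\<in>space M. S k w \<le> t})"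
      by (rule finite_measure_Diff') auto
    also have "measure M ({w\<in>space M. S j w \<le> t} \<inter> {w\<in>space M. S k w \<le> t}) = measure M {w\<in>space M. S k w \<le> t}"
    proof (rule measure_eq_AE)
      show "AE w in M. (w \<in> {w\<in>space M. S j w \<le> t} \<inter> {w\<in>space M. S k w \<le> t}) = (w \<in> {w\<in>space M. S k w \<le> t})"
        using AEpos
      proof eventually_elim
        case (elim w)
        have "S j w \<le> S k w" using mono[of j k w] elim Suc by simp
        then show ?case by auto
      qed
    qed auto
    also have "measure M {w\<in>space M. S j w \<le> t} - measure M {w\<in>space M. S k w \<le> t} = erlang_CDF j r t - erlang_CDF k r t"
      using PA by simp
    also have "\<dots> = pois k" using t by (simp add: erlang_CDF_def pois_def Suc)
    finally show ?thesis .
  qed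
  have "(\<integral>\<^sup>+w. ennreal (c ^ card {n. S n w \<le> t}) \<partial>M) = (\<integral>\<^sup>+w. (\<Sum>k. ennreal (c ^ k) * indicator (Dk k) w) \<partial>M)"
  proof (rule nn_integral_cong_AE)
    show "AE w in M. ennreal (c ^ card {n. S n w \<le> t}) = (\<Sum>k. ennreal (c ^ k) * indicator (Dk k) w)"
      using AEcover
    proof eventually_elim
      case (elim w)
      then obtain k where k: "w \<in> Dk k" by blast
      show ?case using suminf_cmult_indicator[OF disj k, of "\<lambda>k. ennreal (c ^ k)"] Dk_card[OF k] by simp
    qed
  qed
  also have "\<dots> = (\<Sum>k. \<integral>\<^sup>+w. ennreal (c ^ k) * indicator (Dk k) w \<partial>M)"
    by (rule nn_integral_suminf) measurable
  also have "\<dots> = (\<Sum>k. ennreal (c ^ k * pois k))"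
  proof (rule suminf_cong)
    fix k
    have "pois k \<ge> 0" using t r by (simp add: pois_def)
    then show "(\<integral>\<^sup>+w. ennreal (c ^ k) * indicator (Dk k) w \<partial>M) = ennreal (c ^ k * pois k)"
      using c by (simp add: nn_integral_cmult_indicator emeasure_eq_measure PD ennreal_mult)
  qed
  also have "\<dots> = ennreal (\<Sum>k. c ^ k * pois k)"
  proof (rule suminf_ennreal2)
    show "0 \<le> c ^ k * pois k" for k using c t r by (simp add: pois_def)
    have "(\<lambda>k. exp (- r * t) * ((c * r * t) ^ k / fact k)) sums (exp (- r * t) * exp (c * r * t))"
      using exp_converges[of "c * r * t"] by (intro sums_mult) (simp add: divide_inverse_commute scaleR_conv_of_real)
    then have sm: "(\<lambda>k. c ^ k * pois k) sums (exp (- r * t) * exp (c * r * t))"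
      by (simp add: pois_def power_mult_distrib field_simps)
    then show "summable (\<lambda>k. c ^ k * pois k)" by (rule sums_summable)
  qed
  also have "(\<Sum>k. c ^ k * pois k) = exp (r * t * (c - 1))"
  proof -
    have "(\<lambda>k. exp (- r * t) * ((c * r * t) ^ k / fact k)) sums (exp (- r * t) * exp (c * r * t))"
      using exp_converges[of "c * r * t"] by (intro sums_mult) (simp add: divide_inverse_commute scaleR_conv_of_real)
    then have sm: "(\<lambda>k. c ^ k * pois k) sums (exp (- r * t) * exp (c * r * t))"
      by (simp add: pois_def power_mult_distrib field_simps)
    moreover have "exp (- r * t) * exp (c * r * t) = exp (r * t * (c - 1))"
      by (simp add: exp_add[symmetric] algebra_simps)
    ultimately show ?thesis using sums_unique by metis
  qed
  finally show "(\<integral>\<^sup>+w. ennreal (c ^ card {n. (\<Sum>k\<le>n. E k w) \<le> t}) \<partial>M) = ennreal (exp (r * t * (c - 1)))"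
    by (simp add: S_def)
qed

end


context prob_space begin

lemma geom_mgf:
  fixes Q :: "'a \<Rightarrow> nat" and rho z :: real
  assumes Qm: "Q \<in> measurable M (count_space UNIV)"
    and Qd: "\<And>n. prob {w\<in>space M. Q w = n} = (1 - rho) * rho ^ n"
    and rho: "0 < rho" "rho < 1" and z: "z = 1 / sqrt rho"
  shows "(\<integral>\<^sup>+w. ennreal (z ^ Q w) \<partial>M) = ennreal (1 + sqrt rho)"
proof -
  define Dq where "Dq n = {w\<in>space M. Q w = n}" for n
  have Dq_m[measurable]: "Dq n \<in> sets M" for n
    unfolding Dq_def using measurable_sets[OF Qm, of "{n}"] by (simp add: vimage_def Int_def conj_commute)
  have disj: "disjoint_family Dq" unfolding disjoint_family_on_def Dq_def by auto
  have zp: "z > 0" using z rho by simp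
  have sr: "0 < sqrt rho" "sqrt rho < 1" using rho by auto
  have "(\<integral>\<^sup>+w. ennreal (z ^ Q w) \<partial>M) = (\<integral>\<^sup>+w. (\<Sum>n. ennreal (z ^ n) * indicator (Dq n) w) \<partial>M)"
  proof (rule nn_integral_cong)
    fix w assume w: "w \<in> space M"
    then have "w \<in> Dq (Q w)" by (simp add: Dq_def)
    then show "ennreal (z ^ Q w) = (\<Sum>n. ennreal (z ^ n) * indicator (Dq n) w)"
      using suminf_cmult_indicator[OF disj, of w "Q w" "\<lambda>n. ennreal (z ^ n)"] by simp
  qed
  also have "\<dots> = (\<Sum>n. \<integral>\<^sup>+w. ennreal (z ^ n) * indicator (Dq n) w \<partial>M)"
    by (rule nn_integral_suminf) measurable
  also have "\<dots> = (\<Sum>n. ennreal ((1 - rho) * sqrt rho ^ n))"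
  proof (rule suminf_cong)
    fix n
    have "z ^ n * ((1 - rho) * rho ^ n) = (1 - rho) * (z * rho) ^ n" by (simp add: power_mult_distrib)
    also have "z * rho = sqrt rho"
    proof -
      have "z * rho = rho / sqrt rho" using z by simp
      also have "\<dots> = sqrt rho" using rho by (simp add: real_div_sqrt)
      finally show ?thesis .
    qed
    finally have e: "z ^ n * ((1 - rho) * rho ^ n) = (1 - rho) * sqrt rho ^ n" .
    have "0 \<le> (1 - rho) * rho ^ n" using rho by simp
    then show "(\<integral>\<^sup>+w. ennreal (z ^ n) * indicator (Dq n) w \<partial>M) = ennreal ((1 - rho) * sqrt rho ^ n)"
      using zp by (simp add: nn_integral_cmult_indicator emeasure_eq_measure Dq_def[symmetric] Qd[folded Dq_def] ennreal_mult[symmetric] e)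
  qed
  also have "\<dots> = ennreal (\<Sum>n. (1 - rho) * sqrt rho ^ n)"
  proof (rule suminf_ennreal2)
    show "0 \<le> (1 - rho) * sqrt rho ^ n" for n using rho by simp
    show "summable (\<lambda>n. (1 - rho) * sqrt rho ^ n)"
      using sr by (intro summable_mult summable_geometric) simp
  qed
  also have "(\<Sum>n. (1 - rho) * sqrt rho ^ n) = 1 + sqrt rho"
  proof -
    have "(\<Sum>n. (1 - rho) * sqrt rho ^ n) = (1 - rho) * (1 / (1 - sqrt rho))"
    proof -
      have g: "summable (\<lambda>n. sqrt rho ^ n)" using sr by (intro summable_geometric) simp
      have "(\<Sum>n. (1 - rho) * sqrt rho ^ n) = (1 - rho) * (\<Sum>n. sqrt rho ^ n)" by (rule suminf_mult[OF g])
      also have "(\<Sum>n. sqrt rho ^ n) = 1 / (1 - sqrt rho)" using sr by (subst suminf_geometric) auto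
      finally show ?thesis .
    qed
    also have "(1 - rho) * (1 / (1 - sqrt rho)) = 1 + sqrt rho"
    proof -
      have "1 - rho = (1 - sqrt rho) * (1 + sqrt rho)" using rho by (simp add: algebra_simps)
      then show ?thesis using sr by simp
    qed
    finally show ?thesis .
  qed
  finally show ?thesis .
qed

lemma chernoff_j:
  fixes Q :: "'a \<Rightarrow> nat" and A S :: "nat \<Rightarrow> 'a \<Rightarrow> real" and l u t :: real
  assumes l: "0 < l" "l < u" and t: "0 \<le> t"
    and Qm: "Q \<in> measurable M (count_space UNIV)"
    and Qd: "\<And>n. prob {w\<in>space M. Q w = n} = (1 - l / u) * (l / u) ^ n"
    and DA: "\<And>k. distributed M lborel (A k) (exponential_density l)"
    and DS: "\<And>k. distributed M lborel (S k) (exponential_density u)"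
    and iA: "indep_vars (\<lambda>_. borel) A UNIV" and iS: "indep_vars (\<lambda>_. borel) S UNIV"
    and i3: "indep_vars (\<lambda>_. borel) (\<lambda>g w. if g = (0::nat) then ennreal ((1 / sqrt (l / u)) ^ Q w)
              else if g = 1 then ennreal ((1 / sqrt (l / u)) ^ count_proc (\<lambda>k. A k w) t)
              else ennreal (sqrt (l / u) ^ count_proc (\<lambda>k. S k w) t)) {0,1,2}"
  shows "measure M {w\<in>space M. 1 \<le> netput (Q w) (\<lambda>k. A k w) (\<lambda>k. S k w) t}
           \<le> 2 * exp (- t * (sqrt u - sqrt l)^2)"
proof -
  define rho where "rho = l / u"
  have u: "0 < u" using l by simp
  have rho: "0 < rho" "rho < 1" using l u by (auto simp: rho_def)
  define z where "z = 1 / sqrt rho"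
  have sr: "0 < sqrt rho" "sqrt rho < 1" using rho by auto
  have z1: "1 \<le> z" using sr by (simp add: z_def)
  define U where "U g w = (if g = (0::nat) then ennreal (z ^ Q w)
              else if g = 1 then ennreal (z ^ count_proc (\<lambda>k. A k w) t)
              else ennreal (sqrt rho ^ count_proc (\<lambda>k. S k w) t))" for g w
  have iU: "indep_vars (\<lambda>_. borel) U {0,1,2}"
    using i3 unfolding U_def[abs_def] z_def rho_def .
  have Um: "U g \<in> borel_measurable M" if "g \<in> {0,1,2}" for g
    using iU that unfolding indep_vars_def by blast
  have U0: "(\<integral>\<^sup>+w. U 0 w \<partial>M) = ennreal (1 + sqrt rho)"
    unfolding U_def using geom_mgf[OF Qm _ rho z_def] Qd by (simp add: rho_def)
  have U1: "(\<integral>\<^sup>+w. U 1 w \<partial>M) = ennreal (exp (l * t * (z - 1)))"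
    unfolding U_def count_proc_def using poisson_facts(1)[OF l(1) t _ DA iA, of z] z1 by simp
  have U2: "(\<integral>\<^sup>+w. U 2 w \<partial>M) = ennreal (exp (u * t * (sqrt rho - 1)))"
    unfolding U_def count_proc_def using poisson_facts(1)[OF u t _ DS iS, of "sqrt rho"] sr by simp
  have prodI: "(\<integral>\<^sup>+w. (\<Prod>g\<in>{0,1,2}. U g w) \<partial>M) = (\<Prod>g\<in>{0,1,2}. \<integral>\<^sup>+w. U g w \<partial>M)"
    by (rule indep_vars_nn_integral[OF _ iU]) auto
  also have "\<dots> = ennreal ((1 + sqrt rho) * exp (l * t * (z - 1)) * exp (u * t * (sqrt rho - 1)))"
    using U0 U1 U2 sr by (simp add: ennreal_mult mult.assoc)
  finally have prodV: "(\<integral>\<^sup>+w. (\<Prod>g\<in>{0,1,2}. U g w) \<partial>M) = ennreal ((1 + sqrt rho) * exp (l * t * (z - 1)) * exp (u * t * (sqrt rho - 1)))" .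
  define NP where "NP w = netput (Q w) (\<lambda>k. A k w) (\<lambda>k. S k w) t" for w
  have Am[measurable]: "A k \<in> borel_measurable M" for k using distributed_measurable[OF DA[of k]] by simp
  have Sm[measurable]: "S k \<in> borel_measurable M" for k using distributed_measurable[OF DS[of k]] by simp
  have cA: "(\<lambda>w. count_proc (\<lambda>k. A k w) t) \<in> measurable M (count_space UNIV)"
    unfolding count_proc_def by (rule measurable_card_nat[where P="\<lambda>n w. (\<Sum>k\<le>n. A k w) \<le> t"]) measurable
  have cS: "(\<lambda>w. count_proc (\<lambda>k. S k w) t) \<in> measurable M (count_space UNIV)"
    unfolding count_proc_def by (rule measurable_card_nat[where P="\<lambda>n w. (\<Sum>k\<le>n. S k w) \<le> t"]) measurable
  have c2: "(\<lambda>w. (Q w, count_proc (\<lambda>k. A k w) t)) \<in> measurable M (count_space UNIV)"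
    by (rule measurable_cs2[OF Qm cA, where h=Pair])
  have NPm: "NP \<in> measurable M (count_space UNIV)"
    unfolding NP_def netput_def
    by (rule measurable_cs2[OF c2 cS, where h="\<lambda>x y. int (fst x) + int (snd x) - int y", simplified])
  define B where "B = {w\<in>space M. 1 \<le> NP w}"
  have Bm: "B \<in> sets M"
  proof -
    have "B = NP -` {1..} \<inter> space M" by (auto simp: B_def)
    then show ?thesis using measurable_sets[OF NPm, of "{1..}"] by simp
  qed
  have ptw: "indicator B w \<le> ennreal (sqrt rho) * (\<Prod>g\<in>{0,1,2}. U g w)" if w: "w \<in> space M" for w
  proof (cases "w \<in> B")
    case False then show ?thesis by simp
  next
    case True
    define a where "a = Q w + count_proc (\<lambda>k. A k w) t"
    define b where "b = count_proc (\<lambda>k. S k w) t"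
    have ab: "Suc b \<le> a" using True by (simp add: B_def NP_def netput_def a_def b_def)
    have "sqrt rho * (z ^ Q w * z ^ count_proc (\<lambda>k. A k w) t * sqrt rho ^ b) = z ^ a * sqrt rho ^ Suc b"
      by (simp add: a_def power_add)
    also have "sqrt rho ^ Suc b = 1 / z ^ Suc b" using sr by (simp add: z_def power_one_over)
    finally have e: "sqrt rho * (z ^ Q w * z ^ count_proc (\<lambda>k. A k w) t * sqrt rho ^ b) = z ^ a / z ^ Suc b" by simp
    have "z ^ Suc b \<le> z ^ a" by (rule power_increasing[OF ab z1])
    then have "1 \<le> z ^ a / z ^ Suc b" using z1 by simp
    then have "1 \<le> sqrt rho * (z ^ Q w * z ^ count_proc (\<lambda>k. A k w) t * sqrt rho ^ b)" using e by simp
    then have "ennreal 1 \<le> ennreal (sqrt rho * (z ^ Q w * z ^ count_proc (\<lambda>k. A k w) t * sqrt rho ^ b))"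
      by (rule ennreal_leI)
    then show ?thesis using True sr z1 by (simp add: U_def b_def ennreal_mult[symmetric] mult.assoc)
  qed
  have "emeasure M B = (\<integral>\<^sup>+w. indicator B w \<partial>M)" using Bm by simp
  also have "\<dots> \<le> (\<integral>\<^sup>+w. ennreal (sqrt rho) * (\<Prod>g\<in>{0,1,2}. U g w) \<partial>M)"
    by (rule nn_integral_mono) (rule ptw)
  also have "\<dots> = ennreal (sqrt rho) * (\<integral>\<^sup>+w. (\<Prod>g\<in>{0,1,2}. U g w) \<partial>M)"
  proof (rule nn_integral_cmult)
    have [measurable]: "U 0 \<in> borel_measurable M" "U (Suc 0) \<in> borel_measurable M" "U 2 \<in> borel_measurable M"
      using Um by auto
    show "(\<lambda>w. \<Prod>g\<in>{0,1,2}. U g w) \<in> borel_measurable M" by (simp, measurable)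
  qed
  also have "\<dots> = ennreal (sqrt rho * ((1 + sqrt rho) * exp (l * t * (z - 1)) * exp (u * t * (sqrt rho - 1))))"
    using prodV sr by (simp add: ennreal_mult)
  finally have mB0: "ennreal (measure M B) \<le> ennreal (sqrt rho * ((1 + sqrt rho) * exp (l * t * (z - 1)) * exp (u * t * (sqrt rho - 1))))"
    by (simp add: emeasure_eq_measure)
  have vnn: "0 \<le> sqrt rho * ((1 + sqrt rho) * exp (l * t * (z - 1)) * exp (u * t * (sqrt rho - 1)))"
    using sr by simp
  have mB: "measure M B \<le> sqrt rho * ((1 + sqrt rho) * exp (l * t * (z - 1)) * exp (u * t * (sqrt rho - 1)))"
    using mB0 ennreal_le_iff[OF vnn] by simp
  have ex: "exp (l * t * (z - 1)) * exp (u * t * (sqrt rho - 1)) = exp (- t * (sqrt u - sqrt l)^2)"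
  proof -
    have sq: "sqrt rho = sqrt l / sqrt u" by (simp add: rho_def real_sqrt_divide)
    have sl: "0 < sqrt l" "0 < sqrt u" using l u by auto
    have "l * (z - 1) + u * (sqrt rho - 1) = -((sqrt u - sqrt l)^2)"
    proof -
      have "l * z = sqrt l * sqrt u" using sl by (simp add: z_def sq field_simps)
      moreover have "u * sqrt rho = sqrt l * sqrt u" using sl by (simp add: sq field_simps)
      moreover have "(sqrt u - sqrt l)^2 = u + l - 2 * sqrt l * sqrt u" using l u by (simp add: power2_diff)
      ultimately show ?thesis by (simp add: algebra_simps)
    qed
    then have "l * t * (z - 1) + u * t * (sqrt rho - 1) = - t * (sqrt u - sqrt l)^2"
      by (metis (no_types, opaque_lifting) distrib_right mult.commute mult.left_commute mult_minus_left)
    then show ?thesis by (simp add: exp_add[symmetric])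
  qed
  have "sqrt rho * (1 + sqrt rho) \<le> 1 * 2" by (rule mult_mono) (use sr in auto)
  then have "sqrt rho * (1 + sqrt rho) \<le> 2" by simp
  then have "sqrt rho * ((1 + sqrt rho) * exp (l * t * (z - 1)) * exp (u * t * (sqrt rho - 1))) \<le> 2 * exp (- t * (sqrt u - sqrt l)^2)"
  proof -
    have "sqrt rho * ((1 + sqrt rho) * exp (l * t * (z - 1)) * exp (u * t * (sqrt rho - 1)))
        = (sqrt rho * (1 + sqrt rho)) * (exp (l * t * (z - 1)) * exp (u * t * (sqrt rho - 1)))"
      by (simp add: mult.assoc)
    also have "\<dots> = (sqrt rho * (1 + sqrt rho)) * exp (- t * (sqrt u - sqrt l)^2)" by (simp only: ex)
    also have "\<dots> \<le> 2 * exp (- t * (sqrt u - sqrt l)^2)"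
      by (rule mult_right_mono) (use \<open>sqrt rho * (1 + sqrt rho) \<le> 2\<close> in simp_all)
    finally show ?thesis .
  qed
  then show ?thesis using mB by (simp add: B_def NP_def)
qed

end


lemma int_set_has_min:
  fixes V :: "int set"
  assumes ne: "V \<noteq> {}" and lb: "\<And>v. v \<in> V \<Longrightarrow> b \<le> v"
  shows "\<exists>m\<in>V. \<forall>v\<in>V. m \<le> v"
proof -
  obtain v0 where v0: "v0 \<in> V" using ne by blast
  define W where "W = V \<inter> {b..v0}"
  have Wf: "finite W" unfolding W_def by simp
  have Wne: "W \<noteq> {}" using v0 lb by (auto simp: W_def)
  define m where "m = Min W"
  have mW: "m \<in> W" unfolding m_def using Wf Wne by simp
  have "m \<le> v" if "v \<in> V" for v
  proof (cases "v \<le> v0")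
    case True
    then have "v \<in> W" using that lb by (auto simp: W_def)
    then show ?thesis unfolding m_def using Wf by simp
  next
    case False
    have "m \<le> v0" using mW by (simp add: W_def)
    then show ?thesis using False by simp
  qed
  then show ?thesis using mW by (auto simp: W_def)
qed

lemma coupling_pointwise:
  fixes EA ES :: "nat \<Rightarrow> real"
  assumes pos: "\<forall>k. 0 < ES k" and fin: "finite {n. (\<Sum>k\<le>n. ES k) \<le> t}" and t: "0 \<le> t"
    and le: "netput q EA ES t \<le> 0"
  shows "queue_len 0 EA ES t = queue_len q EA ES t"
proof -
  define X where "X s = netput 0 EA ES s" for s
  have Xq: "netput q EA ES s = int q + X s" for s by (simp add: X_def netput_def)
  have lbX: "- int (count_proc ES t) \<le> X s" if "s \<in> {0..t}" for s
  proof -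
    have "{n. (\<Sum>k\<le>n. ES k) \<le> s} \<subseteq> {n. (\<Sum>k\<le>n. ES k) \<le> t}" using that by auto
    then have "count_proc ES s \<le> count_proc ES t" unfolding count_proc_def by (rule card_mono[OF fin])
    then show ?thesis by (simp add: X_def netput_def)
  qed
  have "\<exists>m\<in>X ` {0..t}. \<forall>v\<in>X ` {0..t}. m \<le> v"
    by (rule int_set_has_min[of "X ` {0..t}" "- int (count_proc ES t)"]) (use t lbX in auto)
  then obtain m where m: "m \<in> X ` {0..t}" "\<forall>v\<in>X ` {0..t}. m \<le> v" by blast
  have I0: "Inf ((\<lambda>s. netput 0 EA ES s) ` {0..t}) = m"
    using int_Inf_min[OF m] by (simp add: X_def[abs_def])
  have Iq: "Inf ((\<lambda>s. netput q EA ES s) ` {0..t}) = int q + m"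
  proof (rule int_Inf_min)
    show "int q + m \<in> (\<lambda>s. netput q EA ES s) ` {0..t}" using m(1) by (auto simp: Xq)
    show "\<forall>v\<in>(\<lambda>s. netput q EA ES s) ` {0..t}. int q + m \<le> v" using m(2) by (auto simp: Xq)
  qed
  have "m \<le> X t" using m(2) t by auto
  moreover have "int q + X t \<le> 0" using le by (simp add: Xq)
  ultimately have "m \<le> 0" "int q + m \<le> 0" by auto
  then show ?thesis unfolding queue_len_def I0 Iq using Xq[of t] by (simp add: X_def)
qed

lemma (in prob_space) indep_vars_reindex:
  assumes ind: "indep_vars M' X I" and inj: "inj f" and rng: "range f \<subseteq> I"
  shows "indep_vars (\<lambda>k. M' (f k)) (\<lambda>k. X (f k)) UNIV"
proof -
  have "indep_vars (\<lambda>k. Pi\<^sub>M {f k} M') (\<lambda>k \<omega>. restrict (\<lambda>i. X i \<omega>) {f k}) UNIV"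
    using rng inj by (intro indep_vars_restrict[OF ind]) (auto simp: disjoint_family_on_def inj_def)
  then have "indep_vars (\<lambda>k. M' (f k)) (\<lambda>k \<omega>. (\<lambda>g. g (f k)) (restrict (\<lambda>i. X i \<omega>) {f k})) UNIV"
    by (rule indep_vars_compose2) (rule measurable_component_singleton, simp)
  then show ?thesis by simp
qed


theorem lemma7:
  fixes J :: nat and mu :: "nat \<Rightarrow> real" and Acts :: "'act set"
    and lam :: "'act \<Rightarrow> nat \<Rightarrow> real" and alpha beta :: real and m :: nat
    and a :: 'act and M :: "'w measure"
    and Q0 :: "nat \<Rightarrow> 'w \<Rightarrow> nat" and EA ES :: "nat \<Rightarrow> nat \<Rightarrow> 'w \<Rightarrow> real"
    and t :: real
  assumes J: "J \<ge> 1"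
    and mu_pos: "\<forall>j\<in>{1..J}. mu j > 0"
    and Acts: "finite Acts"
    and lam_pos: "\<forall>b\<in>Acts. \<forall>j\<in>{1..J}. lam b j > 0"
    and load: "\<forall>b\<in>Acts. \<forall>j\<in>{1..J}. lam b j / mu j < 1"
    and alpha: "\<forall>b\<in>Acts. \<forall>j\<in>{1..J}. alpha \<ge> alpha_bound (lam b j) (mu j) \<and> alpha \<ge> 1"
    and beta: "beta > 1"
    and m: "m \<ge> 1"
    and mC: "real m \<ge> exp (beta powr (1 / (beta - 1))) / (2 * real J)"
    and a: "a \<in> Acts"
    and M: "prob_space M"
    and Q0_meas: "\<forall>j\<in>{1..J}. Q0 j \<in> measurable M (count_space UNIV)"
    and Q0_dist: "\<forall>j\<in>{1..J}. \<forall>n::nat.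
         measure M {w \<in> space M. Q0 j w = n} = (1 - lam a j / mu j) * (lam a j / mu j) ^ n"
    and EA_dist: "\<forall>j\<in>{1..J}. \<forall>k. distributed M lborel (EA j k) (exponential_density (lam a j))"
    and ES_dist: "\<forall>j\<in>{1..J}. \<forall>k. distributed M lborel (ES j k) (exponential_density (mu j))"
    and indep: "prob_space.indep_vars M (\<lambda>_. borel) (src_rv Q0 EA ES) (src_set J)"
    and t: "t \<ge> alpha * (ln (2 * real J * real m)) powr beta"
  shows "measure M {w \<in> space M. \<forall>j\<in>{1..J}.
            queue_len 0 (\<lambda>k. EA j k w) (\<lambda>k. ES j k w) t
              = queue_len (Q0 j w) (\<lambda>k. EA j k w) (\<lambda>k. ES j k w) t}
         \<ge> 1 - 1 / real m powr beta"
proof -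
  interpret P: prob_space M by (rule M)
  have lu: "0 < lam a j" "lam a j < mu j" if "j \<in> {1..J}" for j
  proof -
    show "0 < lam a j" using lam_pos a that by blast
    have "lam a j / mu j < 1" using load a that by blast
    moreover have "0 < mu j" using mu_pos that by blast
    ultimately show "lam a j < mu j" by (simp add: divide_less_eq)
  qed
  have j1: "1 \<in> {1..J}" using J by simp
  have alpha1: "1 \<le> alpha" using alpha a j1 by blast
  define Lb where "Lb = ln (2 * real J * real m) powr beta"
  have Lb0: "0 \<le> Lb" by (simp add: Lb_def)
  have tLb: "alpha * Lb \<le> t" using t by (simp add: Lb_def)
  have t0: "0 \<le> t" using tLb alpha1 Lb0 by (meson dual_order.trans mult_nonneg_nonneg zero_le_one)
  have tD: "Lb \<le> t * (sqrt (mu j) - sqrt (lam a j))^2" if j: "j \<in> {1..J}" for j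
  proof -
    define D where "D = (sqrt (mu j) - sqrt (lam a j))^2"
    have D0: "0 \<le> D" by (simp add: D_def)
    have "3/2 \<le> alpha_bound (lam a j) (mu j) * D" unfolding D_def by (rule alpha_bound_ge[OF lu[OF j]])
    also have "\<dots> \<le> alpha * D" using alpha a j D0 by (intro mult_right_mono) auto
    finally have aD: "1 \<le> alpha * D" by simp
    have "Lb \<le> (alpha * D) * Lb" using aD Lb0 by (metis mult_1 mult_right_mono)
    also have "\<dots> = (alpha * Lb) * D" by simp
    also have "\<dots> \<le> t * D" using tLb D0 by (rule mult_right_mono)
    finally show ?thesis by (simp add: D_def)
  qed
  have EAm[measurable]: "EA j k \<in> borel_measurable M" if "j \<in> {1..J}" for j k
    using distributed_measurable[OF EA_dist[rule_format, OF that]] by simp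
  have ESm[measurable]: "ES j k \<in> borel_measurable M" if "j \<in> {1..J}" for j k
    using distributed_measurable[OF ES_dist[rule_format, OF that]] by simp
  have Q0m: "Q0 j \<in> measurable M (count_space UNIV)" if "j \<in> {1..J}" for j
    using Q0_meas that by blast
  define Tj where "Tj j = {w\<in>space M. queue_len 0 (\<lambda>k. EA j k w) (\<lambda>k. ES j k w) t
              = queue_len (Q0 j w) (\<lambda>k. EA j k w) (\<lambda>k. ES j k w) t}" for j
  have Tjm: "Tj j \<in> sets M" if j: "j \<in> {1..J}" for j
    unfolding Tj_def
    by (rule sets_eq_count[OF measurable_queue_len[of "EA j" M "ES j" "\<lambda>_. 0"]
          measurable_queue_len[of "EA j" M "ES j" "Q0 j"]]) (use j Q0m in auto)
  define T where "T = {w \<in> space M. \<forall>j\<in>{1..J}.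
            queue_len 0 (\<lambda>k. EA j k w) (\<lambda>k. ES j k w) t
              = queue_len (Q0 j w) (\<lambda>k. EA j k w) (\<lambda>k. ES j k w) t}"
  have T_eq: "T = (\<Inter>j\<in>{1..J}. Tj j)" using j1 by (auto simp: T_def Tj_def)
  have Tm: "T \<in> sets M" unfolding T_eq using Tjm j1 by (intro sets.finite_INT) auto
  define B where "B j = {w\<in>space M. 1 \<le> netput (Q0 j w) (\<lambda>k. EA j k w) (\<lambda>k. ES j k w) t}" for j
  have Bm: "B j \<in> sets M" if j: "j \<in> {1..J}" for j
  proof -
    have cA: "(\<lambda>w. count_proc (\<lambda>k. EA j k w) t) \<in> measurable M (count_space UNIV)"
      unfolding count_proc_def by (rule measurable_card_nat[where P="\<lambda>n w. (\<Sum>k\<le>n. EA j k w) \<le> t"]) (use j in measurable)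
    have cS: "(\<lambda>w. count_proc (\<lambda>k. ES j k w) t) \<in> measurable M (count_space UNIV)"
      unfolding count_proc_def by (rule measurable_card_nat[where P="\<lambda>n w. (\<Sum>k\<le>n. ES j k w) \<le> t"]) (use j in measurable)
    have c2: "(\<lambda>w. (Q0 j w, count_proc (\<lambda>k. EA j k w) t)) \<in> measurable M (count_space UNIV)"
      by (rule measurable_cs2[OF Q0m[OF j] cA, where h=Pair])
    have NPm: "(\<lambda>w. netput (Q0 j w) (\<lambda>k. EA j k w) (\<lambda>k. ES j k w) t) \<in> measurable M (count_space UNIV)"
      unfolding netput_def
      by (rule measurable_cs2[OF c2 cS, where h="\<lambda>x y. int (fst x) + int (snd x) - int y", simplified])
    have "B j = (\<lambda>w. netput (Q0 j w) (\<lambda>k. EA j k w) (\<lambda>k. ES j k w) t) -` {1..} \<inter> space M"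
      by (auto simp: B_def)
    then show ?thesis using measurable_sets[OF NPm, of "{1..}"] by simp
  qed
  have iA: "P.indep_vars (\<lambda>_. borel) (EA j) UNIV" if j: "j \<in> {1..J}" for j
  proof -
    have "P.indep_vars (\<lambda>k. borel) (\<lambda>k. src_rv Q0 EA ES (Arr j k)) UNIV"
      using j by (intro P.indep_vars_reindex[OF indep]) (auto simp: inj_def src_set_def)
    then show ?thesis by (simp add: src_rv_def)
  qed
  have iS: "P.indep_vars (\<lambda>_. borel) (ES j) UNIV" if j: "j \<in> {1..J}" for j
  proof -
    have "P.indep_vars (\<lambda>k. borel) (\<lambda>k. src_rv Q0 EA ES (Srv j k)) UNIV"
      using j by (intro P.indep_vars_reindex[OF indep]) (auto simp: inj_def src_set_def)
    then show ?thesis by (simp add: src_rv_def)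
  qed
  have i3: "P.indep_vars (\<lambda>_. borel) (\<lambda>g w. if g = (0::nat) then ennreal ((1 / sqrt (lam a j / mu j)) ^ Q0 j w)
              else if g = 1 then ennreal ((1 / sqrt (lam a j / mu j)) ^ count_proc (\<lambda>k. EA j k w) t)
              else ennreal (sqrt (lam a j / mu j) ^ count_proc (\<lambda>k. ES j k w) t)) {0,1,2}"
    if j: "j \<in> {1..J}" for j
  proof -
    define z where "z = 1 / sqrt (lam a j / mu j)"
    define c where "c = sqrt (lam a j / mu j)"
    have zp: "0 < z" using lu[OF j] by (simp add: z_def)
    define K where "K g = (if g = (0::nat) then {Init j} else if g = 1 then range (Arr j) else range (Srv j))" for g
    define Y where "Y g f = (if g = (0::nat) then ennreal (z powr f (Init j))
       else if g = 1 then ennreal (z ^ card {n. (\<Sum>k\<le>n. f (Arr j k)) \<le> t})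
       else ennreal (c ^ card {n. (\<Sum>k\<le>n. f (Srv j k)) \<le> t}))" for g and f :: "src \<Rightarrow> real"
    have r1: "P.indep_vars (\<lambda>g. Pi\<^sub>M (K g) (\<lambda>_. borel)) (\<lambda>g \<omega>. restrict (\<lambda>i. src_rv Q0 EA ES i \<omega>) (K g)) {0,1,2}"
      using j by (intro P.indep_vars_restrict[OF indep]) (auto simp: K_def src_set_def disjoint_family_on_def)
    have Ym: "Y g \<in> measurable (Pi\<^sub>M (K g) (\<lambda>_. borel)) borel" if g: "g \<in> {0,1,2}" for g
    proof -
      consider "g = 0" | "g = 1" | "g = 2" using g by auto
      then show ?thesis
      proof cases
        case 1
        have "(\<lambda>f. f (Init j)) \<in> borel_measurable (Pi\<^sub>M (K g) (\<lambda>_. borel))"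
          by (rule measurable_component_singleton) (simp add: K_def 1)
        then have "(\<lambda>f. ennreal (z powr f (Init j))) \<in> borel_measurable (Pi\<^sub>M (K g) (\<lambda>_. borel))"
          by measurable
        then show ?thesis using 1 by (simp add: Y_def[abs_def])
      next
        case 2
        have comp: "(\<lambda>f. f (Arr j k)) \<in> borel_measurable (Pi\<^sub>M (K g) (\<lambda>_. borel))" for k
          by (rule measurable_component_singleton) (simp add: K_def 2)
        have "(\<lambda>f. card {n. (\<Sum>k\<le>n. f (Arr j k)) \<le> t}) \<in> measurable (Pi\<^sub>M (K g) (\<lambda>_. borel)) (count_space UNIV)"
          by (rule measurable_card_nat[where P="\<lambda>n f. (\<Sum>k\<le>n. f (Arr j k)) \<le> t"]) (use comp in measurable)
        moreover have "(\<lambda>n. ennreal (z ^ n)) \<in> measurable (count_space UNIV) borel" by simp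
        ultimately have "(\<lambda>f. ennreal (z ^ card {n. (\<Sum>k\<le>n. f (Arr j k)) \<le> t})) \<in> borel_measurable (Pi\<^sub>M (K g) (\<lambda>_. borel))"
          by (rule measurable_compose)
        then show ?thesis using 2 by (simp add: Y_def[abs_def])
      next
        case 3
        have comp: "(\<lambda>f. f (Srv j k)) \<in> borel_measurable (Pi\<^sub>M (K g) (\<lambda>_. borel))" for k
          by (rule measurable_component_singleton) (simp add: K_def 3)
        have "(\<lambda>f. card {n. (\<Sum>k\<le>n. f (Srv j k)) \<le> t}) \<in> measurable (Pi\<^sub>M (K g) (\<lambda>_. borel)) (count_space UNIV)"
          by (rule measurable_card_nat[where P="\<lambda>n f. (\<Sum>k\<le>n. f (Srv j k)) \<le> t"]) (use comp in measurable)
        moreover have "(\<lambda>n. ennreal (c ^ n)) \<in> measurable (count_space UNIV) borel" by simp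
        ultimately have "(\<lambda>f. ennreal (c ^ card {n. (\<Sum>k\<le>n. f (Srv j k)) \<le> t})) \<in> borel_measurable (Pi\<^sub>M (K g) (\<lambda>_. borel))"
          by (rule measurable_compose)
        then show ?thesis using 3 by (simp add: Y_def[abs_def])
      qed
    qed
    have r2: "P.indep_vars (\<lambda>_. borel) (\<lambda>g \<omega>. Y g (restrict (\<lambda>i. src_rv Q0 EA ES i \<omega>) (K g))) {0,1,2}"
      by (rule P.indep_vars_compose2[OF r1 Ym])
    show ?thesis
    proof (rule P.indep_vars_cong[THEN iffD1, OF refl _ refl r2])
      fix g :: nat assume g: "g \<in> {0,1,2}"
      show "(\<lambda>\<omega>. Y g (restrict (\<lambda>i. src_rv Q0 EA ES i \<omega>) (K g))) =
        (\<lambda>w. if g = 0 then ennreal ((1 / sqrt (lam a j / mu j)) ^ Q0 j w)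
              else if g = 1 then ennreal ((1 / sqrt (lam a j / mu j)) ^ count_proc (\<lambda>k. EA j k w) t)
              else ennreal (sqrt (lam a j / mu j) ^ count_proc (\<lambda>k. ES j k w) t))"
      proof -
        have zc: "1 / c = z" by (simp add: z_def c_def)
        show ?thesis
          using g zp by (auto simp: Y_def K_def src_rv_def count_proc_def powr_realpow z_def[symmetric] c_def[symmetric] zc)
      qed
    qed
  qed
  have chB: "measure M (B j) \<le> 2 * exp (- Lb)" if j: "j \<in> {1..J}" for j
  proof -
    have "measure M (B j) \<le> 2 * exp (- t * (sqrt (mu j) - sqrt (lam a j))^2)"
      unfolding B_def
      by (rule P.chernoff_j[OF lu[OF j] t0 Q0m[OF j] _ EA_dist[rule_format, OF j] ES_dist[rule_format, OF j]
            iA[OF j] iS[OF j] i3[OF j]]) (use Q0_dist j in auto)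
    also have "\<dots> \<le> 2 * exp (- Lb)" using tD[OF j] by simp
    finally show ?thesis .
  qed
  have AEgood: "AE w in M. \<forall>j\<in>{1..J}. (\<forall>k. 0 < ES j k w) \<and> finite {n. (\<Sum>k\<le>n. ES j k w) \<le> t}"
  proof (rule AE_finite_allI)
    fix j assume j: "j \<in> {1..J}"
    have "0 < mu j" using mu_pos j by blast
    then show "AE w in M. (\<forall>k. 0 < ES j k w) \<and> finite {n. (\<Sum>k\<le>n. ES j k w) \<le> t}"
      by (rule P.poisson_facts(2)[OF _ t0 _ ES_dist[rule_format, OF j] iS[OF j], of 1]) simp
  qed simp
  have incl: "AE w in M. w \<in> space M - T \<longrightarrow> w \<in> (\<Union>j\<in>{1..J}. B j)"
    using AEgood
  proof eventually_elim
    case (elim w)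
    show ?case
    proof
      assume w: "w \<in> space M - T"
      then obtain j where j: "j \<in> {1..J}" and ne: "queue_len 0 (\<lambda>k. EA j k w) (\<lambda>k. ES j k w) t
              \<noteq> queue_len (Q0 j w) (\<lambda>k. EA j k w) (\<lambda>k. ES j k w) t" by (auto simp: T_def)
      have "\<not> netput (Q0 j w) (\<lambda>k. EA j k w) (\<lambda>k. ES j k w) t \<le> 0"
        using coupling_pointwise[of "\<lambda>k. ES j k w" t "Q0 j w" "\<lambda>k. EA j k w"] elim j ne t0 by auto
      then have "w \<in> B j" using w by (auto simp: B_def)
      then show "w \<in> (\<Union>j\<in>{1..J}. B j)" using j by blast
    qed
  qed
  have "measure M (space M - T) \<le> measure M (\<Union>j\<in>{1..J}. B j)"
    by (rule P.finite_measure_mono_AE[OF incl]) (use Bm in auto)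
  also have "\<dots> \<le> (\<Sum>j\<in>{1..J}. measure M (B j))"
    by (rule P.finite_measure_subadditive_finite) (use Bm in auto)
  also have "\<dots> \<le> (\<Sum>j\<in>{1..J}. 2 * exp (- Lb))" by (rule sum_mono) (rule chB)
  also have "\<dots> = real J * (2 * exp (- Lb))" by simp
  also have "\<dots> \<le> 1 / real m powr beta"
    by (rule final_num[OF beta J m mC]) (simp add: Lb_def)
  finally have "measure M (space M - T) \<le> 1 / real m powr beta" .
  moreover have "measure M (space M - T) = 1 - measure M T" using P.prob_compl[OF Tm] by simp
  ultimately show ?thesis unfolding T_def[symmetric] by simp
qed


end
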